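(* Let $n,m\in\mathbb{N}_0$. Then $L_n^{(m)}\big(3+2\,\mathrm{Re}\sqrt[3]{3(1-i\sqrt2)}\big)=0$ if and only if $n=3$ and $m=0$.
   Context: Generalized Laguerre polynomials: $L_n^{(\alpha)}(x)=\sum_{j=0}^n(-1)^j\binom{n+\alpha}{n-j}\frac{x^j}{j!}$. Here $\sqrt[3]{\cdot}$ denotes the principal cube root, so that $3+2\,\mathrm{Re}\sqrt[3]{3(1-i\sqrt2)}$ is the largest root of $L_3^{(0)}(x)=\frac16(-x^3+9x^2-18x+6)$. *)

theory Defs
  imports "HOL-Analysis.Analysis"
begin

definition laguerre :: "nat \<Rightarrow> nat \<Rightarrow> real \<Rightarrow> real" where
  "laguerre n m x = (\<Sum>j=0..n. (-1)^j * real ((n + m) choose (n - j)) * x^j / fact j)"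

definition ccbrt :: "complex \<Rightarrow> complex" where
  "ccbrt z = (if z = 0 then 0 else exp (Ln z / 3))"

definition x3 :: real where
  "x3 = 3 + 2 * Re (ccbrt (3 * (1 - \<i> * complex_of_real (sqrt 2))))"

end

theory Submission
  imports Defs "HOL-Computational_Algebra.Primes"
begin


lemma x3_cubic: "x3^3 = 9*x3^2 - 18*x3 + 6"
proof -
  define z where "z = 3 * (1 - \<i> * complex_of_real (sqrt 2))"
  define w where "w = ccbrt z"
  have z0: "z \<noteq> 0" unfolding z_def by (auto simp: complex_eq_iff)
  have w: "w = exp (Ln z / 3)" using z0 by (simp add: w_def ccbrt_def)
  have w3: "w^3 = z"
  proof -
    have "w^3 = exp (of_nat 3 * (Ln z / 3))" unfolding w by (subst exp_of_nat_mult) simp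
    also have "\<dots> = z" using z0 by simp
    finally show ?thesis .
  qed
  have nz: "(norm z)^2 = 27" unfolding z_def
    by (simp add: cmod_def power2_eq_square)
  have "((norm w)^2)^3 = 27"
  proof -
    have "((norm w)^2)^3 = (norm (w^3))^2" by (simp add: norm_power power_mult[symmetric] mult.commute)
    thus ?thesis using w3 nz by simp
  qed
  hence nw: "(norm w)^2 = 3"
  proof -
    assume h: "((norm w)^2)^3 = 27"
    have "((norm w)^2)^3 = (3::real)^3" using h by simp
    thus ?thesis by (subst (asm) power_eq_iff_eq_base) auto
  qed
  have wc: "w * cnj w = 3"
    using nw complex_norm_square[of w] by simp
  define t where "t = 2 * Re w"
  have tc: "complex_of_real t = w + cnj w" unfolding t_def by (simp add: complex_add_cnj)
  have zc: "z + cnj z = 6" unfolding z_def by (simp add: complex_eq_iff)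
  have "complex_of_real (t^3) = (w + cnj w)^3" using tc by simp
  also have "\<dots> = w^3 + cnj (w^3) + 3 * (w * cnj w) * (w + cnj w)"
    by (simp add: power3_eq_cube algebra_simps)
  also have "\<dots> = complex_of_real (6 + 9 * t)" using w3 zc wc tc by simp
  finally have "t^3 = 6 + 9*t" using of_real_eq_iff by blast
  moreover have "x3 = 3 + t" unfolding x3_def t_def w_def z_def by simp
  ultimately show ?thesis
  proof -
    assume h1: "t^3 = 6 + 9*t" and h2: "x3 = 3 + t"
    have "x3^3 - (9*x3^2 - 18*x3 + 6) = t^3 - 9*t - 6" unfolding h2
      by (simp add: power3_eq_cube power2_eq_square algebra_simps)
    thus ?thesis using h1 by simp
  qed
qed

definition N3 :: "int \<Rightarrow> int \<Rightarrow> int \<Rightarrow> int" where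
 "N3 a b c = a^3 + 9*a^2*b + 45*a^2*c + 18*a*b^2 + 144*a*b*c + 216*a*c^2 + 6*b^3 + 54*b^2*c + 108*b*c^2 + 36*c^3"

lemma N3_zero: "N3 a b c = 0 \<Longrightarrow> a = 0 \<and> b = 0 \<and> c = 0"
proof (induction "nat (\<bar>a\<bar> + \<bar>b\<bar> + \<bar>c\<bar>)" arbitrary: a b c rule: less_induct)
  case less
  have "(3::int) dvd a^3"
  proof -
    have "a^3 = N3 a b c - 3 * (3*a^2*b + 15*a^2*c + 6*a*b^2 + 48*a*b*c + 72*a*c^2 + 2*b^3 + 18*b^2*c + 36*b*c^2 + 12*c^3)"
      by (simp add: N3_def algebra_simps)
    thus ?thesis using less.prems by simp
  qed
  hence "3 dvd a" using prime_dvd_power_int[of 3] by (simp add: prime_dvd_power_iff)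
  then obtain a' where a': "a = 3*a'" by blast
  have "(9::int) dvd 6*b^3"
  proof -
    have "6*b^3 = N3 a b c - 9 * (3*a'^3 + 9*a'^2*b + 45*a'^2*c + 6*a'*b^2 + 48*a'*b*c + 72*a'*c^2 + 6*b^2*c + 12*b*c^2 + 4*c^3)"
      by (simp add: N3_def a' algebra_simps power2_eq_square power3_eq_cube)
    thus ?thesis using less.prems by simp
  qed
  hence "3 dvd b^3" by presburger
  hence "3 dvd b" by (simp add: prime_dvd_power_iff)
  then obtain b' where b': "b = 3*b'" by blast
  have "(27::int) dvd 36*c^3"
  proof -
    have "36*c^3 = N3 a b c - 27 * (a'^3 + 9*a'^2*b' + 15*a'^2*c + 18*a'*b'^2 + 48*a'*b'*c + 24*a'*c^2 + 6*b'^3 + 18*b'^2*c + 12*b'*c^2)"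
      by (simp add: N3_def a' b' algebra_simps power2_eq_square power3_eq_cube)
    thus ?thesis using less.prems by simp
  qed
  hence "3 dvd c^3" by presburger
  hence "3 dvd c" by (simp add: prime_dvd_power_iff)
  then obtain c' where c': "c = 3*c'" by blast
  show ?case
  proof (cases "a = 0 \<and> b = 0 \<and> c = 0")
    case True thus ?thesis .
  next
    case False
    have "N3 a' b' c' = 0" using less.prems
      by (simp add: N3_def a' b' c' algebra_simps power2_eq_square power3_eq_cube)
    moreover have "nat (\<bar>a'\<bar> + \<bar>b'\<bar> + \<bar>c'\<bar>) < nat (\<bar>a\<bar> + \<bar>b\<bar> + \<bar>c\<bar>)"
      using False a' b' c' by (auto simp: abs_mult)
    ultimately have "a' = 0 \<and> b' = 0 \<and> c' = 0" using less.hyps by blast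
    thus ?thesis using a' b' c' by simp
  qed
qed

lemma x3_LI:
  fixes a b c :: int
  assumes "of_int a + of_int b * x3 + of_int c * x3^2 = 0"
  shows "a = 0 \<and> b = 0 \<and> c = 0"
proof -
  define y where "y = x3"
  have p: "y^3 = 9*y^2 - 18*y + 6" using x3_cubic y_def by simp
  define A where "A = real_of_int a"
  define B where "B = real_of_int b"
  define C where "C = real_of_int c"
  have E0: "A + B * y + C * y^2 = 0" using assms y_def A_def B_def C_def by simp
  have E1: "6 * C + (A - 18 * C) * y + (B + 9 * C) * y^2 = 0"
  proof -
    have "y * (A + B * y + C * y^2) - C * (y^3 - (9*y^2 - 18*y + 6)) = 0" using E0 p by simp
    thus ?thesis by (simp add: algebra_simps power2_eq_square power3_eq_cube)
  qed
  have E2: "(6 * B + 54 * C) + (-18 * B - 156 * C) * y + (A + 9 * B + 63 * C) * y^2 = 0"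
  proof -
    have "y * (6 * C + (A - 18 * C) * y + (B + 9 * C) * y^2) - (B + 9 * C) * (y^3 - (9*y^2 - 18*y + 6)) = 0" using E1 p by simp
    thus ?thesis by (simp add: algebra_simps power2_eq_square power3_eq_cube)
  qed
  have "real_of_int (N3 a b c) =
     ((A - 18 * C) * (A + 9 * B + 63 * C) - (B + 9 * C) * (-18 * B - 156 * C)) * (A + B * y + C * y^2)
   + (-(B * (A + 9 * B + 63 * C) - C * (-18 * B - 156 * C))) * (6 * C + (A - 18 * C) * y + (B + 9 * C) * y^2)
   + (B * (B + 9 * C) - C * (A - 18 * C)) * ((6 * B + 54 * C) + (-18 * B - 156 * C) * y + (A + 9 * B + 63 * C) * y^2)"
    unfolding N3_def A_def B_def C_def by (simp add: algebra_simps power2_eq_square power3_eq_cube)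
  also have "\<dots> = 0" using E0 E1 E2 by simp
  finally have "N3 a b c = 0" by simp
  thus ?thesis by (rule N3_zero)
qed

lemma lag30: "laguerre 3 0 x = (6 - 18*x + 9*x^2 - x^3) / 6"
  by (simp add: laguerre_def eval_nat_numeral atLeast0_atMost_Suc field_simps)
lemma lag31: "laguerre 3 1 x = (24 - 36*x + 12*x^2 - x^3) / 6"
  by (simp add: laguerre_def eval_nat_numeral atLeast0_atMost_Suc field_simps)
lemma lag40: "laguerre 4 0 x = (24 - 96*x + 72*x^2 - 16*x^3 + x^4) / 24"
  by (simp add: laguerre_def eval_nat_numeral atLeast0_atMost_Suc field_simps)
lemma lag1: "laguerre 1 m x = real m + 1 - x"
  by (simp add: laguerre_def)
lemma lag0: "laguerre 0 m x = 1"
  by (simp add: laguerre_def)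

definition inR :: "int \<Rightarrow> real \<Rightarrow> bool" where
  "inR k y \<longleftrightarrow> (\<exists>a b c. y = of_int k * (of_int a + of_int b * x3 + of_int c * x3^2))"

lemma inR_0: "inR k 0" unfolding inR_def by (rule exI[of _ 0], rule exI[of _ 0], rule exI[of _ 0]) simp

lemma inR_add: "inR k y \<Longrightarrow> inR k z \<Longrightarrow> inR k (y + z)"
  unfolding inR_def
proof (elim exE)
  fix a b c a' b' c'
  assume "y = of_int k * (of_int a + of_int b * x3 + of_int c * x3^2)"
     "z = of_int k * (of_int a' + of_int b' * x3 + of_int c' * x3^2)"
  thus "\<exists>a b c. y + z = of_int k * (of_int a + of_int b * x3 + of_int c * x3^2)"
    by (intro exI[of _ "a+a'"] exI[of _ "b+b'"] exI[of _ "c+c'"]) (simp add: algebra_simps)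
qed

lemma inR_scale: "inR k y \<Longrightarrow> inR k (of_int t * y)"
  unfolding inR_def
proof (elim exE)
  fix a b c
  assume "y = of_int k * (of_int a + of_int b * x3 + of_int c * x3^2)"
  thus "\<exists>a b c. of_int t * y = of_int k * (of_int a + of_int b * x3 + of_int c * x3^2)"
    by (intro exI[of _ "t*a"] exI[of _ "t*b"] exI[of _ "t*c"]) (simp add: algebra_simps)
qed

lemma inR_x3: "inR k y \<Longrightarrow> inR k (x3 * y)"
  unfolding inR_def
proof (elim exE)
  fix a b c
  assume y: "y = of_int k * (of_int a + of_int b * x3 + of_int c * x3^2)"
  have "x3 * y = of_int k * (of_int (6*c) + of_int (a - 18*c) * x3 + of_int (b + 9*c) * x3^2)"
  proof -
    have "x3 * y = of_int k * (of_int a * x3 + of_int b * x3^2 + of_int c * x3^3)"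
      unfolding y by (simp add: algebra_simps power2_eq_square power3_eq_cube)
    also have "\<dots> = of_int k * (of_int (6*c) + of_int (a - 18*c) * x3 + of_int (b + 9*c) * x3^2)"
      unfolding x3_cubic by (simp add: algebra_simps)
    finally show ?thesis .
  qed
  thus "\<exists>a b c. x3 * y = of_int k * (of_int a + of_int b * x3 + of_int c * x3^2)" by blast
qed

lemma inR_pow: "inR k y \<Longrightarrow> inR k (x3^i * y)"
  by (induction i) (auto simp: mult.assoc dest: inR_x3)

lemma inR_one: "inR 1 1"
  unfolding inR_def by (rule exI[of _ 1], rule exI[of _ 0], rule exI[of _ 0]) simp

lemma inR_mul_k: "inR 1 y \<Longrightarrow> inR k (of_int k * y)"
  unfolding inR_def by auto

lemma inR_beta: "inR k y \<Longrightarrow> inR k ((x3^2 - 9*x3 + 18) * y)"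
proof -
  assume h: "inR k y"
  have "(x3^2 - 9*x3 + 18) * y = x3 * (x3 * y) + (of_int (-9) * (x3 * y) + of_int 18 * y)"
    by (simp add: algebra_simps power2_eq_square)
  thus ?thesis using h by (simp only:) (intro inR_add inR_x3 inR_scale)
qed

lemma inR_beta_pow: "inR k y \<Longrightarrow> inR k ((x3^2 - 9*x3 + 18)^i * y)"
  by (induction i) (auto simp: mult.assoc dest: inR_beta)

lemma inR_sum: "(\<And>j. j \<in> A \<Longrightarrow> inR k (f j)) \<Longrightarrow> inR k (\<Sum>j\<in>A. f j)"
  by (induction A rule: infinite_finite_induct) (auto simp: inR_0 intro: inR_add)

lemma main_lemma:
  fixes cc :: "nat \<Rightarrow> int" and l :: int
  assumes n: "2 \<le> n" and l: "prime l" "\<not> l dvd 6"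
    and dv: "\<forall>j<n-2. l dvd cc j" and nd: "\<not> l dvd cc n"
    and S: "(\<Sum>j\<le>n. of_int (cc j) * x3^j) = 0"
  shows False
proof -
  obtain k where k: "n = k + 2" using n by (metis add.commute le_Suc_ex)
  define h where "h = of_int (cc k) + of_int (cc (k+1)) * x3 + of_int (cc (k+2)) * x3^2"
  define S1 where "S1 = (\<Sum>j<k. of_int (cc j) * x3^j)"
  have split: "(\<Sum>j\<le>n. of_int (cc j) * x3^j) = S1 + x3^k * h"
    unfolding k S1_def h_def
    by (simp add: lessThan_Suc_atMost[symmetric] algebra_simps power2_eq_square)
  have "inR l S1" unfolding S1_def
  proof (rule inR_sum)
    fix j assume "j \<in> {..<k}"
    hence "l dvd cc j" using dv k by auto
    then obtain d where d: "cc j = l * d" by blast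
    have "inR l (of_int l * (of_int d * (x3^j * 1)))"
      by (intro inR_mul_k inR_scale inR_pow inR_one)
    thus "inR l (of_int (cc j) * x3^j)" by (simp add: d algebra_simps)
  qed
  hence "inR l (of_int (-1) * S1)" by (rule inR_scale)
  moreover have "of_int (-1) * S1 = x3^k * h" using S split by simp
  ultimately have "inR l (x3^k * h)" by simp
  hence "inR l ((x3^2 - 9*x3 + 18)^k * (x3^k * h))" by (rule inR_beta_pow)
  moreover have "(x3^2 - 9*x3 + 18)^k * (x3^k * h) = 6^k * h"
  proof -
    have "(x3^2 - 9*x3 + 18) * x3 = 6" using x3_cubic by (simp add: algebra_simps power2_eq_square power3_eq_cube)
    hence "(x3^2 - 9*x3 + 18)^k * x3^k = 6^k" by (metis power_mult_distrib)
    thus ?thesis by (metis mult.assoc)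
  qed
  ultimately obtain a b c where abc: "6^k * h = of_int l * (of_int a + of_int b * x3 + of_int c * x3^2)"
    unfolding inR_def by auto
  have "of_int (6^k * cc k - l * a) + of_int (6^k * cc (k+1) - l * b) * x3 + of_int (6^k * cc (k+2) - l * c) * x3^2 = 0"
    using abc unfolding h_def by (simp add: algebra_simps)
  hence "6^k * cc (k+2) - l * c = 0" using x3_LI by blast
  hence "l dvd 6^k * cc n" using k by (metis dvd_triv_left eq_iff_diff_eq_0)
  hence "l dvd 6^k \<or> l dvd cc n" using l(1) prime_dvd_mult_iff by blast
  thus False using nd l by (meson prime_dvd_power)
qed

definition cf :: "nat \<Rightarrow> nat \<Rightarrow> nat \<Rightarrow> int" where
  "cf n m j = (-1)^j * int ((n choose j) * (fact (n+m) div fact (n + m - (n - j))))"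

lemma lag_int: "fact n * laguerre n m x = (\<Sum>j\<le>n. of_int (cf n m j) * x^j)"
proof -
  have "fact n * laguerre n m x = (\<Sum>j\<le>n. fact n * ((-1)^j * real ((n + m) choose (n - j)) * x^j / fact j))"
    unfolding laguerre_def by (simp add: sum_distrib_left atLeast0AtMost)
  also have "\<dots> = (\<Sum>j\<le>n. of_int (cf n m j) * x^j)"
  proof (rule sum.cong[OF refl])
    fix j assume "j \<in> {..n}"
    hence j: "j \<le> n" by simp
    define N where "N = n + m"
    define k where "k = n - j"
    have kN: "k \<le> N" unfolding k_def N_def by simp
    have d: "real (fact N div fact (N - k)) = fact N / fact (N - k)"
      by (subst real_of_nat_div) (auto simp: fact_dvd)
    have b1: "real (N choose k) = fact N / (fact k * fact (N - k))" using binomial_fact[OF kN] by simp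
    have b2: "real (n choose j) = fact n / (fact j * fact k)" using binomial_fact[OF j] k_def by simp
    have "fact n * ((-1)^j * real (N choose k) * x^j / fact j) =
          (-1)^j * real (n choose j) * real (fact N div fact (N - k)) * x^j"
      unfolding d b1 b2 by (simp add: field_simps)
    thus "fact n * ((-1)^j * real ((n + m) choose (n - j)) * x^j / fact j) = of_int (cf n m j) * x^j"
      unfolding cf_def N_def k_def by simp
  qed
  finally show ?thesis .
qed

lemma cf_top: "cf n m n = (-1)^n"
  unfolding cf_def by simp

lemma cf_dvd:
  fixes p :: nat
  assumes "j + 3 \<le> n" "i \<le> 2" "p dvd (n + m - i)"
  shows "int p dvd cf n m j"
proof -
  define N where "N = n + m"
  define k where "k = n - j"
  have "fact N div fact (N - k) = \<Prod>{N - k + 1..N}"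
    by (rule fact_div_fact) simp
  moreover have "N - i \<in> {N - k + 1..N}" using assms unfolding N_def k_def by auto
  ultimately have "(N - i) dvd fact N div fact (N - k)"
    by (metis dvd_prodI finite_atLeastAtMost id_apply prod.cong)
  hence "p dvd fact N div fact (N - k)" using assms(3) N_def dvd_trans by blast
  hence "p dvd (n choose j) * (fact N div fact (N - k))" by simp
  hence "int p dvd int ((n choose j) * (fact N div fact (N - k)))" by (simp only: int_dvd_int_iff)
  thus ?thesis unfolding cf_def N_def k_def by simp
qed


lemma smooth_pow2:
  fixes k :: nat
  assumes "k > 0" "\<not> 3 dvd k" "\<forall>p. prime p \<longrightarrow> p dvd k \<longrightarrow> p \<le> 3"
  shows "\<exists>a. k = 2^a"
  using assms
proof (induction k rule: less_induct)
  case (less k)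
  show ?case
  proof (cases "k = 1")
    case True thus ?thesis by (intro exI[of _ 0]) simp
  next
    case False
    then obtain p where p: "prime p" "p dvd k" using prime_factor_nat by blast
    have "p \<le> 3" using less.prems p by blast
    moreover have "p \<noteq> 3" using p less.prems by blast
    moreover have "p \<ge> 2" using p prime_ge_2_nat by blast
    ultimately have "p = 2" by linarith
    then obtain k' where k': "k = 2 * k'" using p by blast
    have "k' < k" "k' > 0" using k' less.prems by auto
    moreover have "\<not> 3 dvd k'" using k' less.prems by auto
    moreover have "\<forall>p. prime p \<longrightarrow> p dvd k' \<longrightarrow> p \<le> 3" using k' less.prems by auto
    ultimately obtain a where "k' = 2^a" using less.IH by blast
    thus ?thesis using k' by (intro exI[of _ "Suc a"]) simp
  qed
qed

lemma pow2_succ: "(2::nat)^a + 1 = 2^b \<Longrightarrow> a = 0"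
proof (rule ccontr)
  assume h: "2^a + 1 = (2::nat)^b" "a \<noteq> 0"
  hence "even ((2::nat)^a)" by simp
  hence "odd ((2::nat)^b)" using h(1) by (metis even_plus_one_iff)
  hence "b = 0" by simp
  thus False using h by simp
qed

lemma pow2_plus2: "(2::nat)^a + 2 = 2^b \<Longrightarrow> a = 1"
proof -
  assume h: "(2::nat)^a + 2 = 2^b"
  have "b \<noteq> 0" using h by (cases b) auto
  then obtain b' where b': "b = Suc b'" by (cases b) auto
  show "a = 1"
  proof (cases a)
    case 0
    hence "(3::nat) = 2 * 2^b'" using h b' by simp
    hence "even (3::nat)" by (metis dvd_triv_left)
    thus ?thesis by simp
  next
    case (Suc a')
    hence "2 * (2^a' + 1) = (2::nat) * 2^b'" using h b' by simp
    hence "2^a' + 1 = (2::nat)^b'" by simp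
    hence "a' = 0" by (rule pow2_succ)
    thus ?thesis using Suc by simp
  qed
qed

lemma big_prime:
  fixes N :: nat
  assumes "N \<ge> 3" "N \<noteq> 3" "N \<noteq> 4"
  shows "\<exists>p i. prime p \<and> p \<ge> 5 \<and> i \<le> 2 \<and> p dvd (N - i)"
proof (rule ccontr)
  assume "\<not> ?thesis"
  hence sm0: "\<And>i p. i \<le> 2 \<Longrightarrow> prime p \<Longrightarrow> p dvd (N - i) \<Longrightarrow> \<not> p \<ge> 5" by blast
  have n4: "\<not> prime (4::nat)"
  proof
    assume "prime (4::nat)"
    hence "prime ((2::nat) * 2)" by simp
    thus False using prime_product by fastforce
  qed
  have sm: "\<And>i p. i \<le> 2 \<Longrightarrow> prime p \<Longrightarrow> p dvd (N - i) \<Longrightarrow> p \<le> 3"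
  proof -
    fix i p assume h: "i \<le> 2" "prime (p::nat)" "p dvd (N - i)"
    have "p \<noteq> 4" using h(2) n4 by auto
    thus "p \<le> 3" using sm0[OF h] by linarith
  qed
  have P: "\<And>i. i \<le> 2 \<Longrightarrow> \<not> 3 dvd (N - i) \<Longrightarrow> \<exists>a. N - i = 2^a"
    using sm assms(1) by (intro smooth_pow2) auto
  have "N mod 3 = 0 \<or> N mod 3 = 1 \<or> N mod 3 = 2" by linarith
  moreover
  { assume "N mod 3 = 0"
    hence "\<not> 3 dvd (N - 1)" "\<not> 3 dvd (N - 2)" using assms(1) by presburger+
    then obtain a b where "N - 2 = 2^a" "N - 1 = 2^b" using P by (metis le_refl one_le_numeral)
    hence "2^a + 1 = (2::nat)^b" using assms(1) by simp
    hence "a = 0" by (rule pow2_succ)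
    hence False using \<open>N - 2 = 2^a\<close> assms by simp }
  moreover
  { assume "N mod 3 = 1"
    hence "\<not> 3 dvd (N - 0)" "\<not> 3 dvd (N - 2)" using assms(1) by presburger+
    then obtain a b where "N - 2 = 2^a" "N - 0 = 2^b" using P by (metis le_refl zero_le)
    hence "2^a + 2 = (2::nat)^b" using assms(1) by simp
    hence "a = 1" by (rule pow2_plus2)
    hence False using \<open>N - 2 = 2^a\<close> assms by simp }
  moreover
  { assume "N mod 3 = 2"
    hence "\<not> 3 dvd (N - 0)" "\<not> 3 dvd (N - 1)" using assms(1) by presburger+
    then obtain a b where "N - 1 = 2^a" "N - 0 = 2^b" using P by (metis one_le_numeral zero_le)
    hence "2^a + 1 = (2::nat)^b" using assms(1) by simp
    hence "a = 0" by (rule pow2_succ)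
    hence False using \<open>N - 1 = 2^a\<close> assms by simp }
  ultimately show False by argo
qed

theorem proposition4:
  fixes n m :: nat
  shows "laguerre n m x3 = 0 \<longleftrightarrow> n = 3 \<and> m = 0"
proof
  assume L: "laguerre n m x3 = 0"
  have S: "(\<Sum>j\<le>n. of_int (cf n m j) * x3^j) = 0" using lag_int[of n m x3] L by simp
  have nd: "\<And>l::int. prime l \<Longrightarrow> \<not> l dvd cf n m n"
  proof
    fix l :: int assume "prime l" "l dvd cf n m n"
    moreover have "is_unit (cf n m n)" unfolding cf_top by simp
    ultimately show False using dvd_unit_imp_unit not_prime_unit by blast
  qed
  show "n = 3 \<and> m = 0"
  proof (cases "n \<le> 2")
    case True
    hence "n = 0 \<or> n = 1 \<or> n = 2" by linarith
    moreover
    { assume "n = 0" hence False using L lag0 by simp }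
    moreover
    { assume n1: "n = 1"
      have "of_int (cf 1 m 0) + of_int (cf 1 m 1) * x3 + of_int 0 * x3^2 = 0"
        using S n1 by simp
      hence "cf 1 m 1 = 0" using x3_LI by blast
      hence False using cf_top[of 1 m] by simp }
    moreover
    { assume n2: "n = 2"
      have "(\<Sum>j\<le>2. of_int (cf 2 m j) * x3^j) = 0" using S n2 by simp
      hence "of_int (cf 2 m 0) + of_int (cf 2 m 1) * x3 + of_int (cf 2 m 2) * x3^2 = 0"
        by (simp add: numeral_2_eq_2 atMost_Suc algebra_simps)
      hence "cf 2 m 2 = 0" using x3_LI by blast
      hence False using cf_top[of 2 m] by simp }
    ultimately show ?thesis by blast
  next
    case False
    hence n3: "n \<ge> 3" by simp
    show ?thesis
    proof (cases "n + m = 3 \<or> n + m = 4")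
      case True
      hence "(n = 3 \<and> m = 0) \<or> (n = 3 \<and> m = 1) \<or> (n = 4 \<and> m = 0)" using n3 by auto
      moreover
      { assume h: "n = 3 \<and> m = 1"
        hence "laguerre 3 1 x3 = 0" using L by simp
        hence "24 - 36*x3 + 12*x3^2 - x3^3 = 0" unfolding lag31 by simp
        hence "of_int 18 + of_int (-18) * x3 + of_int 3 * x3^2 = 0"
          unfolding x3_cubic by simp
        hence False using x3_LI[of 18 "-18" 3] by simp }
      moreover
      { assume h: "n = 4 \<and> m = 0"
        hence "laguerre 4 0 x3 = 0" using L by simp
        hence "24 - 96*x3 + 72*x3^2 - 16*x3^3 + x3^4 = 0" unfolding lag40 by simp
        moreover have "x3^4 = 63*x3^2 - 156*x3 + 54"
        proof -
          have a: "x3^4 = x3 * x3^3" by (simp add: eval_nat_numeral)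
          have b: "x3 * x3^2 = x3^3" by (simp add: eval_nat_numeral)
          have c: "x3 * x3^3 = 9 * (x3 * x3^2) - 18 * x3^2 + 6 * x3"
          proof -
            have "x3 * x3^3 = x3 * (9*x3^2 - 18*x3 + 6)" by (simp only: x3_cubic)
            also have "\<dots> = 9 * (x3 * x3^2) - 18 * (x3 * x3) + 6 * x3"
              by (simp only: ring_distribs mult.left_commute)
            finally show ?thesis by (simp add: power2_eq_square)
          qed
          show ?thesis using a b c x3_cubic by linarith
        qed
        ultimately have "-18 + 36 * x3 - 9 * x3^2 = 0" using x3_cubic by linarith
        hence "of_int (-18) + of_int 36 * x3 + of_int (-9) * x3^2 = 0"
          by simp
        hence False using x3_LI[of "-18" 36 "-9"] by simp }
      ultimately show ?thesis by blast
    next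
      case False
      then obtain p i where p: "prime p" "p \<ge> 5" "i \<le> 2" "p dvd (n + m - i)"
        using big_prime[of "n + m"] n3 by auto
      have lp: "prime (int p)" using p(1) by simp
      have l6: "\<not> int p dvd 6"
      proof
        assume "int p dvd 6"
        hence "int p dvd int 6" by simp
        hence "p dvd 6" by (simp only: int_dvd_int_iff)
        hence "p dvd 2 * 3" by simp
        hence "p dvd 2 \<or> p dvd 3" using p(1) prime_dvd_mult_iff by blast
        hence "p \<le> 3" by (elim disjE) (auto dest: dvd_imp_le)
        thus False using p(2) by simp
      qed
      have dv: "\<forall>j<n-2. int p dvd cf n m j"
      proof (intro allI impI)
        fix j assume "j < n - 2"
        hence "j + 3 \<le> n" using n3 by linarith
        thus "int p dvd cf n m j" by (rule cf_dvd[OF _ p(3) p(4)])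
      qed
      have "2 \<le> n" using n3 by linarith
      have False by (rule main_lemma[OF \<open>2 \<le> n\<close> lp l6 dv nd[OF lp] S])
      thus ?thesis ..
    qed
  qed
next
  assume "n = 3 \<and> m = 0"
  moreover have "laguerre 3 0 x3 = 0" unfolding lag30 x3_cubic by simp
  ultimately show "laguerre n m x3 = 0" by simp
qed

end
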